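(* Let $\Theta$ be a finite set, let $P_1,\dots,P_m$ be experiments, and let $(A,u)$ be a decision problem admitting a weak decomposition $(A_1,u_1),\dots,(A_k,u_k)$. Then $$V(P_1,\dots,P_m;(A,u))\ge\sum_{\ell=1}^kV(P_1,\dots,P_m;(A_\ell,u_\ell)).$$
   Context: $\Theta$ is a finite set of states. A decision problem is a pair $(A,u)$ with $A$ a finite nonempty action set and $u:\Theta\times A\to\mathbb{R}$; for $\alpha\in\Delta(A)$ write $u(\theta,\alpha)=\sum_a\alpha(a)u(\theta,a)$. An experiment is a map $P:\Theta\to\Delta(Y)$ with $Y$ a finite signal set. Given experiments $P_j:\Theta\to\Delta(Y_j)$, $j=1,\dots,m$, let $\mathbf Y=Y_1\times\cdots\times Y_m$ and let $\mathcal P(P_1,\dots,P_m)$ be the set of experiments $P:\Theta\to\Delta(\mathbf Y)$ whose $j$-th marginal is $P_j(\cdot|\theta)$ for every $\theta$ and $j$. A strategy is a map $\sigma:\mathbf Y\to\Delta(A)$. Define $V(P_1,\dots,P_m;(A,u))=\max_{\sigma}\min_{P\in\mathcal P(P_1,\dots,P_m)}\sum_{\theta}\sum_{\mathbf y}P(\mathbf y|\theta)u(\theta,\sigma(\mathbf y))$. The composition $\bigoplus_{\ell=1}^k(A_\ell,u_\ell)$ is the decision problem with action set $A_1\times\cdots\times A_k$ and utility $u(\theta,(a_1,\dots,a_k))=\sum_\ell u_\ell(\theta,a_\ell)$. For a decision problem let $\mathcal H(A,u)=\mathrm{co}\{u(\cdot,a):a\in A\}-\mathbb{R}_+^{\Theta}$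 (Minkowski difference). A decision problem $(A,u)$ admits a weak decomposition $\{(A_\ell,u_\ell)\}_{\ell=1}^k$ if $\mathcal H(\bigoplus_{\ell=1}^k(A_\ell,u_\ell))\subseteq\mathcal H(A,u)$. *)

theory Defs
  imports "HOL-Analysis.Analysis"
begin

text \<open>States: a finite type 'th (Theta = UNIV). Signals of experiment j are a finite set
  Y j of a common carrier type 'y; joint signals are the extensional functions
  PiE {..<m} Y (i.e. tuples (y 0, ..., y (m-1))).\<close>

definition is_dist :: "'x set \<Rightarrow> ('x \<Rightarrow> real) \<Rightarrow> bool" where
  "is_dist S p \<longleftrightarrow> (\<forall>x\<in>S. 0 \<le> p x) \<and> sum p S = 1"

definition is_experiment :: "'y set \<Rightarrow> ('th \<Rightarrow> 'y \<Rightarrow> real) \<Rightarrow> bool" where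
  "is_experiment Y P \<longleftrightarrow> finite Y \<and> (\<forall>\<theta>. is_dist Y (P \<theta>))"

definition joint_signals :: "nat \<Rightarrow> (nat \<Rightarrow> 'y set) \<Rightarrow> (nat \<Rightarrow> 'y) set" where
  "joint_signals m Y = PiE {..<m} Y"

definition couplings ::
  "nat \<Rightarrow> (nat \<Rightarrow> 'y set) \<Rightarrow> (nat \<Rightarrow> 'th \<Rightarrow> 'y \<Rightarrow> real) \<Rightarrow> ('th \<Rightarrow> (nat \<Rightarrow> 'y) \<Rightarrow> real) set" where
  "couplings m Y P = {Q. (\<forall>\<theta>. is_dist (joint_signals m Y) (Q \<theta>)) \<and>
     (\<forall>\<theta>. \<forall>j<m. \<forall>y\<in>Y j.
        (\<Sum>ys\<in>{ys \<in> joint_signals m Y. ys j = y}. Q \<theta> ys) = P j \<theta> y)}"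

definition strategies :: "nat \<Rightarrow> (nat \<Rightarrow> 'y set) \<Rightarrow> 'a set \<Rightarrow> ((nat \<Rightarrow> 'y) \<Rightarrow> 'a \<Rightarrow> real) set" where
  "strategies m Y A = {\<sigma>. \<forall>ys\<in>joint_signals m Y. is_dist A (\<sigma> ys)}"

definition payoff ::
  "nat \<Rightarrow> (nat \<Rightarrow> 'y set) \<Rightarrow> 'a set \<Rightarrow> ('th::finite \<Rightarrow> 'a \<Rightarrow> real)
    \<Rightarrow> ('th \<Rightarrow> (nat \<Rightarrow> 'y) \<Rightarrow> real) \<Rightarrow> ((nat \<Rightarrow> 'y) \<Rightarrow> 'a \<Rightarrow> real) \<Rightarrow> real" where
  "payoff m Y A u Q \<sigma> =
     (\<Sum>\<theta>\<in>UNIV. \<Sum>ys\<in>joint_signals m Y. Q \<theta> ys * (\<Sum>a\<in>A. \<sigma> ys a * u \<theta> a))"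

definition V ::
  "nat \<Rightarrow> (nat \<Rightarrow> 'y set) \<Rightarrow> (nat \<Rightarrow> 'th::finite \<Rightarrow> 'y \<Rightarrow> real) \<Rightarrow> 'a set \<Rightarrow> ('th \<Rightarrow> 'a \<Rightarrow> real) \<Rightarrow> real" where
  "V m Y P A u = (SUP \<sigma>\<in>strategies m Y A. INF Q\<in>couplings m Y P. payoff m Y A u Q \<sigma>)"

definition comp_actions :: "nat \<Rightarrow> (nat \<Rightarrow> 'b set) \<Rightarrow> (nat \<Rightarrow> 'b) set" where
  "comp_actions k As = PiE {..<k} As"

definition comp_utility :: "nat \<Rightarrow> (nat \<Rightarrow> 'th \<Rightarrow> 'b \<Rightarrow> real) \<Rightarrow> 'th \<Rightarrow> (nat \<Rightarrow> 'b) \<Rightarrow> real" where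
  "comp_utility k us \<theta> a = (\<Sum>l<k. us l \<theta> (a l))"

definition Hset :: "'a set \<Rightarrow> ('th::finite \<Rightarrow> 'a \<Rightarrow> real) \<Rightarrow> (real^'th) set" where
  "Hset A u = {w - p | w p. w \<in> convex hull ((\<lambda>a. \<chi> \<theta>. u \<theta> a) ` A) \<and> (\<forall>\<theta>. 0 \<le> p $ \<theta>)}"

definition decision_problem :: "'a set \<Rightarrow> bool" where
  "decision_problem A \<longleftrightarrow> finite A \<and> A \<noteq> {}"

definition weak_decomposition ::
  "'a set \<Rightarrow> ('th::finite \<Rightarrow> 'a \<Rightarrow> real) \<Rightarrow> nat \<Rightarrow> (nat \<Rightarrow> 'b set) \<Rightarrow> (nat \<Rightarrow> 'th \<Rightarrow> 'b \<Rightarrow> real) \<Rightarrow> bool" where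
  "weak_decomposition A u k As us \<longleftrightarrow>
     (\<forall>l<k. decision_problem (As l)) \<and>
     Hset (comp_actions k As) (comp_utility k us) \<subseteq> Hset A u"

end

theory Submission
  imports Defs
begin

lemma hull_sum:
  fixes us :: "nat \<Rightarrow> 'th::finite \<Rightarrow> 'b \<Rightarrow> real"
  assumes "\<forall>l<k. x l \<in> convex hull ((\<lambda>b. \<chi> \<theta>. us l \<theta> b) ` As l)"
  shows "(\<Sum>l<k. x l) \<in> convex hull ((\<lambda>a. \<chi> \<theta>. \<Sum>l<k. us l \<theta> (a l)) ` PiE {..<k} As)"
  using assms
proof (induction k)
  case 0
  then show ?case by (auto intro!: hull_inc simp: vec_eq_iff)
next
  case (Suc k)
  let ?S = "(\<lambda>a. \<chi> \<theta>. \<Sum>l<k. us l \<theta> (a l)) ` PiE {..<k} As"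
  let ?T = "(\<lambda>b. \<chi> \<theta>. us k \<theta> b) ` As k"
  have "(\<Sum>l<k. x l) + x k \<in> convex hull ?S + convex hull ?T"
    using Suc by (intro set_plus_intro) auto
  also have "\<dots> = convex hull (?S + ?T)" by (simp add: convex_hull_set_plus)
  also have "\<dots> \<subseteq> convex hull ((\<lambda>a. \<chi> \<theta>. \<Sum>l<Suc k. us l \<theta> (a l)) ` PiE {..<Suc k} As)"
  proof (rule hull_mono, rule subsetI)
    fix z assume "z \<in> ?S + ?T"
    then obtain a b where a: "a \<in> PiE {..<k} As" and b: "b \<in> As k"
      and z: "z = (\<chi> \<theta>. \<Sum>l<k. us l \<theta> (a l)) + (\<chi> \<theta>. us k \<theta> b)"
      by (auto simp: set_plus_def)
    have "a(k := b) \<in> PiE {..<Suc k} As"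
      using a b by (auto simp: PiE_def extensional_def less_Suc_eq)
    moreover have "z = (\<chi> \<theta>. \<Sum>l<Suc k. us l \<theta> ((a(k:=b)) l))"
      using z by (simp add: vec_eq_iff)
    ultimately show "z \<in> (\<lambda>a. \<chi> \<theta>. \<Sum>l<Suc k. us l \<theta> (a l)) ` PiE {..<Suc k} As" by blast
  qed
  finally show ?case by simp
qed

lemma hull_weights:
  fixes f :: "'a \<Rightarrow> 'v::real_vector"
  assumes "finite A" "A \<noteq> {}" "x \<in> convex hull (f ` A)"
  shows "\<exists>\<alpha>. is_dist A \<alpha> \<and> x = (\<Sum>a\<in>A. \<alpha> a *\<^sub>R f a)"
proof -
  let ?C = "{y. \<exists>\<alpha>. is_dist A \<alpha> \<and> y = (\<Sum>a\<in>A. \<alpha> a *\<^sub>R f a)}"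
  have "f ` A \<subseteq> ?C"
  proof
    fix y assume "y \<in> f ` A"
    then obtain a0 where a0: "a0 \<in> A" "y = f a0" by auto
    have "is_dist A (\<lambda>a. if a = a0 then 1 else 0)"
      using a0 assms(1) by (simp add: is_dist_def)
    moreover have "y = (\<Sum>a\<in>A. (if a = a0 then 1 else 0) *\<^sub>R f a)"
      proof -
      have "(\<Sum>a\<in>A. (if a = a0 then 1 else 0) *\<^sub>R f a) = (\<Sum>a\<in>A. if a = a0 then f a else 0)"
        by (rule sum.cong) auto
      then show ?thesis using a0 assms(1) by simp
    qed
    ultimately show "y \<in> ?C" by blast
  qed
  moreover have "convex ?C"
  proof (rule convexI)
    fix y z :: 'v and t s :: real
    assume "y \<in> ?C" "z \<in> ?C" and ts: "0 \<le> t" "0 \<le> s" "t + s = 1"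
    then obtain \<alpha> \<beta> where ab: "is_dist A \<alpha>" "y = (\<Sum>a\<in>A. \<alpha> a *\<^sub>R f a)"
      "is_dist A \<beta>" "z = (\<Sum>a\<in>A. \<beta> a *\<^sub>R f a)" by blast
    have "is_dist A (\<lambda>a. t * \<alpha> a + s * \<beta> a)"
      using ab ts by (simp add: is_dist_def sum.distrib sum_distrib_left[symmetric])
    moreover have "t *\<^sub>R y + s *\<^sub>R z = (\<Sum>a\<in>A. (t * \<alpha> a + s * \<beta> a) *\<^sub>R f a)"
      using ab by (simp add: scaleR_sum_right scaleR_add_left sum.distrib)
    ultimately show "t *\<^sub>R y + s *\<^sub>R z \<in> ?C" by blast
  qed
  ultimately have "convex hull (f ` A) \<subseteq> ?C" by (rule hull_minimal)
  then show ?thesis using assms(3) by blast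
qed

lemma finite_js:
  assumes "\<forall>j<m. is_experiment (Y j) (P j)"
  shows "finite (joint_signals m Y)"
  using assms unfolding joint_signals_def is_experiment_def by (intro finite_PiE) auto

lemma coupling_exists:
  fixes P :: "nat \<Rightarrow> 'th \<Rightarrow> 'y \<Rightarrow> real"
  assumes "\<forall>j<m. is_experiment (Y j) (P j)"
  shows "(\<lambda>\<theta> ys. \<Prod>j<m. P j \<theta> (ys j)) \<in> couplings m Y P"
proof -
  have fin: "\<And>j. j < m \<Longrightarrow> finite (Y j)" using assms by (auto simp: is_experiment_def)
  have d: "\<And>j \<theta>. j < m \<Longrightarrow> is_dist (Y j) (P j \<theta>)" using assms by (auto simp: is_experiment_def)
  have "is_dist (joint_signals m Y) (\<lambda>ys. \<Prod>j<m. P j \<theta> (ys j))" for \<theta>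
  proof -
    have "(\<Sum>g\<in>joint_signals m Y. \<Prod>j<m. P j \<theta> (g j)) = (\<Prod>j<m. \<Sum>y\<in>Y j. P j \<theta> y)"
      unfolding joint_signals_def using fin by (subst prod_sum_PiE) auto
    also have "\<dots> = 1" using d by (simp add: is_dist_def)
    finally show ?thesis using d
      by (auto simp: is_dist_def joint_signals_def PiE_def intro!: prod_nonneg)
  qed
  moreover have "(\<Sum>ys\<in>{ys \<in> joint_signals m Y. ys j = y}. \<Prod>i<m. P i \<theta> (ys i)) = P j \<theta> y"
    if j: "j < m" "y \<in> Y j" for \<theta> j y
  proof -
    have eq: "{ys \<in> joint_signals m Y. ys j = y} = PiE {..<m} (Y(j:={y}))"
      using j unfolding joint_signals_def by (auto simp: PiE_def Pi_def)
    have "(\<Sum>ys\<in>PiE {..<m} (Y(j:={y})). \<Prod>i<m. P i \<theta> (ys i)) = (\<Prod>i<m. \<Sum>z\<in>(Y(j:={y})) i. P i \<theta> z)"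
      using fin by (subst prod_sum_PiE) auto
    also have "\<dots> = (\<Prod>i<m. if i = j then P j \<theta> y else 1)"
      using d by (intro prod.cong) (auto simp: is_dist_def)
    also have "\<dots> = P j \<theta> y" using j by (simp add: prod.delta)
    finally show ?thesis using eq by simp
  qed
  ultimately show ?thesis unfolding couplings_def by auto
qed

lemma payoff_bound:
  fixes u :: "'th::finite \<Rightarrow> 'a \<Rightarrow> real"  and B :: real
  assumes "finite A" "Q \<in> couplings m Y P" "\<sigma> \<in> strategies m Y A" "finite (joint_signals m Y)"
    "\<And>\<theta> a. a \<in> A \<Longrightarrow> \<bar>u \<theta> a\<bar> \<le> B"
  shows "\<bar>payoff m Y A u Q \<sigma>\<bar> \<le> CARD('th) * B"
proof -
  have inner: "\<bar>\<Sum>a\<in>A. \<sigma> ys a * u \<theta> a\<bar> \<le> B" if ys: "ys \<in> joint_signals m Y" for ys \<theta>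
  proof -
    have dd: "is_dist A (\<sigma> ys)" using assms(3) ys by (auto simp: strategies_def)
    have "\<bar>\<Sum>a\<in>A. \<sigma> ys a * u \<theta> a\<bar> \<le> (\<Sum>a\<in>A. \<bar>\<sigma> ys a * u \<theta> a\<bar>)" by (rule sum_abs)
    also have "\<dots> \<le> (\<Sum>a\<in>A. \<sigma> ys a * B)"
      using dd assms(5) by (intro sum_mono) (auto simp: is_dist_def abs_mult intro: mult_left_mono)
    also have "\<dots> = B" using dd by (simp add: is_dist_def sum_distrib_right[symmetric])
    finally show ?thesis .
  qed
  have outer: "\<bar>\<Sum>ys\<in>joint_signals m Y. Q \<theta> ys * (\<Sum>a\<in>A. \<sigma> ys a * u \<theta> a)\<bar> \<le> B" for \<theta>
  proof -
    have dd: "is_dist (joint_signals m Y) (Q \<theta>)" using assms(2) by (auto simp: couplings_def)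
    have "\<bar>\<Sum>ys\<in>joint_signals m Y. Q \<theta> ys * (\<Sum>a\<in>A. \<sigma> ys a * u \<theta> a)\<bar>
        \<le> (\<Sum>ys\<in>joint_signals m Y. \<bar>Q \<theta> ys * (\<Sum>a\<in>A. \<sigma> ys a * u \<theta> a)\<bar>)" by (rule sum_abs)
    also have "\<dots> \<le> (\<Sum>ys\<in>joint_signals m Y. Q \<theta> ys * B)"
      using dd inner by (intro sum_mono) (auto simp: is_dist_def abs_mult intro: mult_left_mono)
    also have "\<dots> = B" using dd by (simp add: is_dist_def sum_distrib_right[symmetric])
    finally show ?thesis .
  qed
  have "\<bar>payoff m Y A u Q \<sigma>\<bar> \<le> (\<Sum>\<theta>\<in>(UNIV::'th set). B)"
    unfolding payoff_def by (rule order_trans[OF sum_abs]) (intro sum_mono outer)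
  then show ?thesis by simp
qed

lemma W_facts:
  fixes u :: "'th::finite \<Rightarrow> 'a \<Rightarrow> real"
    and B :: real
  assumes exp: "\<forall>j<m. is_experiment (Y j) (P j)" and A: "finite A" and sg: "\<sigma> \<in> strategies m Y A"
  defines "B \<equiv> (\<Sum>\<theta>\<in>UNIV. \<Sum>a\<in>A. \<bar>u \<theta> a\<bar>)"
  shows "bdd_below ((\<lambda>Q. payoff m Y A u Q \<sigma>) ` couplings m Y P)"
    and "\<bar>(INF Q\<in>couplings m Y P. payoff m Y A u Q \<sigma>)\<bar> \<le> CARD('th) * B"
proof -
  have Bb: "\<bar>u \<theta> a\<bar> \<le> B" if "a \<in> A" for \<theta> a
  proof -
    have "\<bar>u \<theta> a\<bar> \<le> (\<Sum>a\<in>A. \<bar>u \<theta> a\<bar>)" using A that by (intro member_le_sum) auto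
    also have "\<dots> \<le> B" unfolding B_def by (intro member_le_sum) auto
    finally show ?thesis .
  qed
  have fj: "finite (joint_signals m Y)" using exp by (rule finite_js)
  have pb: "\<bar>payoff m Y A u Q \<sigma>\<bar> \<le> CARD('th) * B" if "Q \<in> couplings m Y P" for Q
    using payoff_bound[OF A that sg fj Bb] by simp
  show bb: "bdd_below ((\<lambda>Q. payoff m Y A u Q \<sigma>) ` couplings m Y P)"
    using pb by (intro bdd_belowI[where m="- (CARD('th) * B)"]) (force simp: abs_le_iff)
  have ne: "couplings m Y P \<noteq> {}" using coupling_exists[OF exp] by blast
  have lo: "- (CARD('th) * B) \<le> (INF Q\<in>couplings m Y P. payoff m Y A u Q \<sigma>)"
    using pb ne by (intro cINF_greatest) (force simp: abs_le_iff)+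
  obtain Q0 where Q0: "Q0 \<in> couplings m Y P" using ne by blast
  have hi: "(INF Q\<in>couplings m Y P. payoff m Y A u Q \<sigma>) \<le> CARD('th) * B"
    using pb[OF Q0] by (intro cINF_lower2[OF bb Q0]) (simp add: abs_le_iff)
  show "\<bar>(INF Q\<in>couplings m Y P. payoff m Y A u Q \<sigma>)\<bar> \<le> CARD('th) * B"
    using lo hi by (simp add: abs_le_iff)
qed

lemma strategies_ne:
  assumes "decision_problem A" shows "strategies m Y A \<noteq> {}"
proof -
  obtain a0 where a0: "a0 \<in> A" using assms by (auto simp: decision_problem_def)
  have "(\<lambda>ys a. if a = a0 then 1 else 0) \<in> strategies m Y A"
    using a0 assms by (auto simp: strategies_def is_dist_def decision_problem_def)
  then show ?thesis by blast
qed

lemma W_bdd_above: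
  fixes u :: "'th::finite \<Rightarrow> 'a \<Rightarrow> real"
  assumes exp: "\<forall>j<m. is_experiment (Y j) (P j)" and A: "finite A"
  shows "bdd_above ((\<lambda>\<sigma>. INF Q\<in>couplings m Y P. payoff m Y A u Q \<sigma>) ` strategies m Y A)"
  using W_facts(2)[OF exp A] by (intro bdd_aboveI[where M="CARD('th) * (\<Sum>\<theta>\<in>UNIV. \<Sum>a\<in>A. \<bar>u \<theta> a\<bar>)"])
    (force simp: abs_le_iff)

lemma key:
  fixes P :: "nat \<Rightarrow> 'th::finite \<Rightarrow> 'y \<Rightarrow> real"
    and A :: "'a set" and u :: "'th \<Rightarrow> 'a \<Rightarrow> real"
    and As :: "nat \<Rightarrow> 'b set" and us :: "nat \<Rightarrow> 'th \<Rightarrow> 'b \<Rightarrow> real"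
    and s :: "nat \<Rightarrow> (nat \<Rightarrow> 'y) \<Rightarrow> 'b \<Rightarrow> real"
  assumes exp: "\<forall>j<m. is_experiment (Y j) (P j)"
    and dA: "decision_problem A"
    and wd: "weak_decomposition A u k As us"
    and s: "\<forall>l<k. s l \<in> strategies m Y (As l)"
  shows "(\<Sum>l<k. INF Q\<in>couplings m Y P. payoff m Y (As l) (us l) Q (s l)) \<le> V m Y P A u"
proof -
  have finA: "finite A" "A \<noteq> {}" using dA by (auto simp: decision_problem_def)
  have finAs: "\<And>l. l < k \<Longrightarrow> finite (As l)" using wd by (auto simp: weak_decomposition_def decision_problem_def)
  define val where "val ys \<theta> = (\<Sum>l<k. \<Sum>b\<in>As l. s l ys b * us l \<theta> b)" for ys \<theta>
  have ex: "\<exists>\<alpha>. is_dist A \<alpha> \<and> (\<forall>\<theta>. val ys \<theta> \<le> (\<Sum>a\<in>A. \<alpha> a * u \<theta> a))"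
    if ys: "ys \<in> joint_signals m Y" for ys
  proof -
    define x where "x l = (\<chi> \<theta>. \<Sum>b\<in>As l. s l ys b * us l \<theta> b)" for l
    have xin: "\<forall>l<k. x l \<in> convex hull ((\<lambda>b. \<chi> \<theta>. us l \<theta> b) ` As l)"
    proof (intro allI impI)
      fix l assume l: "l < k"
      have dl: "is_dist (As l) (s l ys)" using s l ys by (auto simp: strategies_def)
      have "x l = (\<Sum>b\<in>As l. s l ys b *\<^sub>R (\<chi> \<theta>. us l \<theta> b))"
        by (simp add: x_def vec_eq_iff)
      also have "\<dots> \<in> convex hull ((\<lambda>b. \<chi> \<theta>. us l \<theta> b) ` As l)"
        using dl finAs[OF l] by (intro convex_sum) (auto simp: is_dist_def intro: hull_inc)
      finally show "x l \<in> convex hull ((\<lambda>b. \<chi> \<theta>. us l \<theta> b) ` As l)" .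
    qed
    have "(\<Sum>l<k. x l) \<in> convex hull ((\<lambda>a. \<chi> \<theta>. \<Sum>l<k. us l \<theta> (a l)) ` PiE {..<k} As)"
      using hull_sum[OF xin] .
    moreover have "(\<Sum>l<k. x l) = (\<chi> \<theta>. val ys \<theta>)" by (simp add: x_def val_def vec_eq_iff)
    ultimately have "(\<chi> \<theta>. val ys \<theta>) \<in> Hset (comp_actions k As) (comp_utility k us)"
      unfolding Hset_def comp_actions_def comp_utility_def
      by (intro CollectI exI[where x="\<chi> \<theta>. val ys \<theta>"] exI[where x=0]) auto
    then have "(\<chi> \<theta>. val ys \<theta>) \<in> Hset A u" using wd by (auto simp: weak_decomposition_def)
    then obtain w p where wp: "(\<chi> \<theta>. val ys \<theta>) = w - p" "w \<in> convex hull ((\<lambda>a. \<chi> \<theta>. u \<theta> a) ` A)"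
      "\<forall>\<theta>. 0 \<le> p $ \<theta>" unfolding Hset_def by blast
    obtain \<alpha> where \<alpha>: "is_dist A \<alpha>" "w = (\<Sum>a\<in>A. \<alpha> a *\<^sub>R (\<chi> \<theta>. u \<theta> a))"
      using hull_weights[OF finA wp(2)] by blast
    have "val ys \<theta> \<le> (\<Sum>a\<in>A. \<alpha> a * u \<theta> a)" for \<theta>
    proof -
      have "val ys \<theta> = w $ \<theta> - p $ \<theta>" using arg_cong[OF wp(1), of "\<lambda>v. v $ \<theta>"] by simp
      also have "\<dots> \<le> w $ \<theta>" using wp(3) by simp
      also have "\<dots> = (\<Sum>a\<in>A. \<alpha> a * u \<theta> a)" using \<alpha>(2) by simp
      finally show ?thesis .
    qed
    then show ?thesis using \<alpha>(1) by blast
  qed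
  define \<sigma> where "\<sigma> ys = (SOME \<alpha>. is_dist A \<alpha> \<and> (\<forall>\<theta>. val ys \<theta> \<le> (\<Sum>a\<in>A. \<alpha> a * u \<theta> a)))" for ys
  have \<sigma>: "is_dist A (\<sigma> ys) \<and> (\<forall>\<theta>. val ys \<theta> \<le> (\<Sum>a\<in>A. \<sigma> ys a * u \<theta> a))"
    if "ys \<in> joint_signals m Y" for ys
    unfolding \<sigma>_def using someI_ex[OF ex[OF that]] .
  have \<sigma>s: "\<sigma> \<in> strategies m Y A" using \<sigma> by (auto simp: strategies_def)
  have ne: "couplings m Y P \<noteq> {}" using coupling_exists[OF exp] by blast
  have main: "(\<Sum>l<k. INF Q\<in>couplings m Y P. payoff m Y (As l) (us l) Q (s l)) \<le> payoff m Y A u Q \<sigma>"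
    if Q: "Q \<in> couplings m Y P" for Q
  proof -
    have Qd: "\<And>\<theta> ys. ys \<in> joint_signals m Y \<Longrightarrow> 0 \<le> Q \<theta> ys"
      using Q by (auto simp: couplings_def is_dist_def)
    have "(\<Sum>l<k. INF Q\<in>couplings m Y P. payoff m Y (As l) (us l) Q (s l))
        \<le> (\<Sum>l<k. payoff m Y (As l) (us l) Q (s l))"
      using s finAs Q by (intro sum_mono cINF_lower W_facts(1)[OF exp]) auto
    also have "\<dots> = (\<Sum>\<theta>\<in>UNIV. \<Sum>ys\<in>joint_signals m Y. Q \<theta> ys * val ys \<theta>)"
      unfolding payoff_def val_def
      by (simp add: sum_distrib_left sum.swap[of _ "{..<k}"] sum.swap[of _ "{..<k}" "joint_signals m Y"])
    also have "\<dots> \<le> payoff m Y A u Q \<sigma>"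
      unfolding payoff_def using \<sigma> Qd by (intro sum_mono mult_left_mono) auto
    finally show ?thesis .
  qed
  have "(\<Sum>l<k. INF Q\<in>couplings m Y P. payoff m Y (As l) (us l) Q (s l))
      \<le> (INF Q\<in>couplings m Y P. payoff m Y A u Q \<sigma>)"
    using ne main by (intro cINF_greatest) auto
  also have "\<dots> \<le> V m Y P A u"
    unfolding V_def using \<sigma>s W_bdd_above[OF exp finA(1)] by (intro cSUP_upper) auto
  finally show ?thesis .
qed

theorem lemma7:
  fixes m k :: nat
    and Y :: "nat \<Rightarrow> 'y set"
    and P :: "nat \<Rightarrow> 'th::finite \<Rightarrow> 'y \<Rightarrow> real"
    and A :: "'a set" and u :: "'th \<Rightarrow> 'a \<Rightarrow> real"
    and As :: "nat \<Rightarrow> 'b set" and us :: "nat \<Rightarrow> 'th \<Rightarrow> 'b \<Rightarrow> real"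
  assumes "\<forall>j<m. is_experiment (Y j) (P j)"
    and "decision_problem A"
    and "weak_decomposition A u k As us"
  shows "V m Y P A u \<ge> (\<Sum>l<k. V m Y P (As l) (us l))"
proof (rule field_le_epsilon)
  fix e :: real assume e: "0 < e"
  define \<epsilon> where "\<epsilon> = e / (real k + 1)"
  have \<epsilon>: "0 < \<epsilon>" "real k * \<epsilon> \<le> e" using e
    by (auto simp: \<epsilon>_def field_simps)
  have dl: "\<And>l. l < k \<Longrightarrow> decision_problem (As l)" using assms(3) by (auto simp: weak_decomposition_def)
  have "\<forall>l<k. \<exists>\<sigma>\<in>strategies m Y (As l). V m Y P (As l) (us l) - \<epsilon> < (INF Q\<in>couplings m Y P. payoff m Y (As l) (us l) Q \<sigma>)"
  proof (intro allI impI)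
    fix l assume l: "l < k"
    have "V m Y P (As l) (us l) - \<epsilon> < V m Y P (As l) (us l)" using \<epsilon> by simp
    then show "\<exists>\<sigma>\<in>strategies m Y (As l). V m Y P (As l) (us l) - \<epsilon> < (INF Q\<in>couplings m Y P. payoff m Y (As l) (us l) Q \<sigma>)"
      unfolding V_def[of m Y P "As l"]
      using strategies_ne[OF dl[OF l]] W_bdd_above[OF assms(1), of "As l"] dl[OF l]
      by (subst (asm) less_cSUP_iff) (auto simp: decision_problem_def)
  qed
  then obtain s where s: "\<forall>l<k. s l \<in> strategies m Y (As l) \<and>
      V m Y P (As l) (us l) - \<epsilon> < (INF Q\<in>couplings m Y P. payoff m Y (As l) (us l) Q (s l))"
    by metis
  have "(\<Sum>l<k. V m Y P (As l) (us l)) - real k * \<epsilon> = (\<Sum>l<k. V m Y P (As l) (us l) - \<epsilon>)"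
    by (simp add: sum_subtractf)
  also have "\<dots> \<le> (\<Sum>l<k. INF Q\<in>couplings m Y P. payoff m Y (As l) (us l) Q (s l))"
    using s by (intro sum_mono) (auto intro: less_imp_le)
  also have "\<dots> \<le> V m Y P A u" using key[OF assms] s by blast
  finally show "(\<Sum>l<k. V m Y P (As l) (us l)) \<le> V m Y P A u + e" using \<epsilon> by linarith
qed

end
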